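(* Let $g\ge1$, $n=g+1$, $B\in\mathbb Z^{g\times n}$ with $B_{i,1}=1$, $B_{i,i+1}=-1$ and other entries $0$, $Q=BB^T$, and let $k\in\{1,\dots,g\}$ and $\mathbf a\in[\mathbf k]$. Then the Delaunay set $\mathcal D_{\mathbf a,Q}$ is in bijection with the set $[\mathbf k]$ and with the set $\mathcal B_{\mathbf a,v_1}$ of bases of the matroid $\mathcal M_{\mathbf a,v_1}$.
   Context: $V_Q=\{\mathbf a\in\mathbb R^g:\ \mathbf a^TQ\mathbf a\le(\mathbf a-\mathbf c)^TQ(\mathbf a-\mathbf c)\ \forall\mathbf c\in\mathbb Z^g\}$ is the Voronoi polytope of the genus-$g$ banana graph (two vertices $v_1,v_2$ joined by $n$ edges). $[\mathbf k]\subset\mathbb R^g$ is the set of vectors with entries in $\{-\tfrac{k}{g+1},\tfrac{g+1-k}{g+1}\}$ having $k$ or $k-1$ entries equal to $\tfrac{g+1-k}{g+1}$ (these are vertices of $V_Q$). $\mathcal D_{\mathbf a,Q}=\{\mathbf c\in\mathbb Z^g:\mathbf a^TQ\mathbf a=(\mathbf a-\mathbf c)^TQ(\mathbf a-\mathbf c)\}$. Let $\mathbf s_{\mathbf a}\in\{0,1\}^n$ have $j$-th entry $0$ if $(B^T\mathbf a)_j>0$ and $1$ if $(B^T\mathbf a)_j<0$. The matroid $\mathcal M_{\mathbf a,v_1}$ on ground set $[n]$ has bases $\mathcal B_{\mathbf a,v_1}=\{I\subset[n],|I|=k:\ \exists\mathbf c\in\mathcal D_{\mathbf a,Q}\text{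 with }(B^T\mathbf c+\mathbf s_{\mathbf a})_i=1\ \forall i\in I\}$. *)

theory Defs
  imports Complex_Main
begin

text \<open>Conventions: indices are 0-based. Rows of B are 0..<g, columns (edges) are 0..<n with n = g+1.
 Paper's column 1 is our column 0, paper's column i+1 (for row i) is our column i+1 for row i (0-based).
 Vectors in R^g / Z^g are functions nat => real / nat => int that vanish outside {0..<g}.\<close>

definition bmat :: "nat \<Rightarrow> nat \<Rightarrow> int" where
  "bmat i j = (if j = 0 then 1 else if j = i + 1 then -1 else 0)"

definition qmat :: "nat \<Rightarrow> nat \<Rightarrow> nat \<Rightarrow> int" where
  "qmat g i j = (\<Sum>l<g+1. bmat i l * bmat j l)"

definition qform :: "nat \<Rightarrow> (nat \<Rightarrow> real) \<Rightarrow> real" where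
  "qform g x = (\<Sum>i<g. \<Sum>j<g. x i * of_int (qmat g i j) * x j)"

definition BTmul :: "nat \<Rightarrow> (nat \<Rightarrow> 'a::comm_ring_1) \<Rightarrow> nat \<Rightarrow> 'a" where
  "BTmul g x j = (\<Sum>i<g. of_int (bmat i j) * x i)"

definition realvecs :: "nat \<Rightarrow> (nat \<Rightarrow> real) set" where
  "realvecs g = {x. \<forall>i\<ge>g. x i = 0}"

definition intvecs :: "nat \<Rightarrow> (nat \<Rightarrow> int) set" where
  "intvecs g = {c. \<forall>i\<ge>g. c i = 0}"

definition kset :: "nat \<Rightarrow> nat \<Rightarrow> (nat \<Rightarrow> real) set" where
  "kset g k = {a \<in> realvecs g.
     (\<forall>i<g. a i = - (real k / real (g+1)) \<or> a i = real (g+1-k) / real (g+1)) \<and>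
     (card {i. i < g \<and> a i = real (g+1-k) / real (g+1)} = k \<or>
      card {i. i < g \<and> a i = real (g+1-k) / real (g+1)} = k - 1)}"

definition delaunay :: "nat \<Rightarrow> (nat \<Rightarrow> real) \<Rightarrow> (nat \<Rightarrow> int) set" where
  "delaunay g a = {c \<in> intvecs g.
     qform g a = qform g (\<lambda>i. a i - of_int (c i))}"

text \<open>s_a (value at zero entries is irrelevant: for a in [k], B^T a has no zero entry).\<close>
definition svec :: "nat \<Rightarrow> (nat \<Rightarrow> real) \<Rightarrow> nat \<Rightarrow> int" where
  "svec g a j = (if BTmul g a j > 0 then 0 else 1)"

definition bases :: "nat \<Rightarrow> nat \<Rightarrow> (nat \<Rightarrow> real) \<Rightarrow> nat set set" where
  "bases g k a = {I. I \<subseteq> {..<g+1} \<and> card I = k \<and>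
     (\<exists>c \<in> delaunay g a. \<forall>i\<in>I. BTmul g c i + svec g a i = 1)}"

end

theory Submission
  imports Defs
begin


lemma BT_Suc: "i < g \<Longrightarrow> BTmul g x (Suc i) = - x i"
proof -
  assume i: "i < g"
  have "BTmul g x (Suc i) = (\<Sum>l<g. if l = i then - x l else 0)"
    unfolding BTmul_def bmat_def by (rule sum.cong) auto
  also have "\<dots> = - x i" using i by (simp add: sum.delta')
  finally show ?thesis .
qed

lemma BT_0: "BTmul g x 0 = (\<Sum>i<g. x i)"
  unfolding BTmul_def bmat_def by simp

lemma BT_sum0: "(\<Sum>j<g+1. BTmul g x j) = 0"
proof -
  have "(\<Sum>i<g. BTmul g x (Suc i)) = (\<Sum>i<g. - x i)" by (rule sum.cong) (auto simp: BT_Suc)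
  then show ?thesis by (simp del: sum.lessThan_Suc add: sum.lessThan_Suc_shift BT_0 sum_negf)
qed

lemma BT_0': "BTmul g x 0 = - (\<Sum>i<g. BTmul g x (Suc i))"
  using BT_sum0[of g x] by (simp del: sum.lessThan_Suc add: sum.lessThan_Suc_shift eq_neg_iff_add_eq_0)

lemma qmat_eq: "i < g \<Longrightarrow> j < g \<Longrightarrow> qmat g i j = 1 + (if i = j then 1 else 0)"
proof -
  assume i: "i < g" and j: "j < g"
  have "qmat g i j = 1 + (\<Sum>l<g. if l = i then (if j = i then 1 else 0) else 0)"
  proof -
    have "\<And>l. bmat i (Suc l) * bmat j (Suc l) = (if l = i then (if j = i then 1 else 0) else 0)"
      by (auto simp: bmat_def)
    then show ?thesis unfolding qmat_def by (simp del: sum.lessThan_Suc add: sum.lessThan_Suc_shift) (simp add: bmat_def)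
  qed
  also have "\<dots> = 1 + (if i = j then 1 else 0)" using i by (simp add: sum.delta')
  finally show ?thesis .
qed

lemma qform_eq: "qform g x = (\<Sum>j<g+1. (BTmul g x j)^2)"
proof -
  have "qform g x = (\<Sum>i<g. \<Sum>j<g. x i * x j + (if i = j then x i * x j else 0))"
    unfolding qform_def by (intro sum.cong refl) (simp add: qmat_eq algebra_simps)
  also have "\<dots> = (\<Sum>i<g. x i) ^ 2 + (\<Sum>i<g. (x i)^2)"
    by (simp add: sum.distrib sum.delta power2_eq_square sum_product)
  also have "\<dots> = (\<Sum>j<g+1. (BTmul g x j)^2)"
  proof -
    have "(\<Sum>i<g. (BTmul g x (Suc i))^2) = (\<Sum>i<g. (x i)^2)" by (rule sum.cong) (auto simp: BT_Suc)
    then show ?thesis by (simp del: sum.lessThan_Suc add: sum.lessThan_Suc_shift BT_0)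
  qed
  finally show ?thesis .
qed

lemma BT_lin: "BTmul g (\<lambda>i. a i - of_int (c i)) j = BTmul g a j - of_int (BTmul g c j)"
  unfolding BTmul_def by (simp add: sum_subtractf algebra_simps)

lemma BT_recon:
  fixes w :: "nat \<Rightarrow> 'a::comm_ring_1"
  assumes "(\<Sum>j<g+1. w j) = 0" "j < g+1"
  shows "BTmul g (\<lambda>i. if i < g then - w (Suc i) else 0) j = w j"
proof (cases j)
  case 0
  have "BTmul g (\<lambda>i. if i < g then - w (Suc i) else 0) 0 = - (\<Sum>i<g. w (Suc i))"
    by (simp add: BT_0 sum_negf)
  also have "\<dots> = w 0" using assms(1) by (simp del: sum.lessThan_Suc add: sum.lessThan_Suc_shift add_eq_0_iff)
  finally show ?thesis using 0 by simp
next
  case (Suc i)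
  then show ?thesis using assms by (simp add: BT_Suc)
qed

lemma BT_uniq:
  assumes "\<forall>i\<ge>g. x i = 0" "\<forall>i\<ge>g. x' i = 0" "\<forall>j<g+1. BTmul g x j = BTmul g x' j"
  shows "x = x'"
proof
  fix i show "x i = x' i"
  proof (cases "i < g")
    case True
    then show ?thesis using assms(3)[rule_format, of "Suc i"] by (simp add: BT_Suc)
  qed (use assms in auto)
qed

lemma card_sum: fixes n :: nat shows "card {i. i < n \<and> Q i} = (\<Sum>i<n. if Q i then 1 else 0 :: nat)"
proof (induct n)
  case (Suc n)
  have "{i. i < Suc n \<and> Q i} = {i. i < n \<and> Q i} \<union> (if Q n then {n} else {})" by (auto simp: less_Suc_eq)
  then show ?case using Suc by (auto simp: card_insert_if)
qed simp



definition tt :: "nat \<Rightarrow> nat \<Rightarrow> real" where "tt g k = real k / real (g+1)"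

lemma tt_props: assumes "1 \<le> k" "k \<le> g"
  shows "0 < tt g k" "tt g k < 1" "real (g+1) * tt g k = real k"
    "real (g+1-k) / real (g+1) = 1 - tt g k" "real k / real (g+1) = tt g k"
  using assms by (auto simp: tt_def field_simps of_nat_diff)

lemma ind_sum_real: fixes n :: nat shows "real (\<Sum>i<n. if Q i then 1 else 0 :: nat) = (\<Sum>i<n. if Q i then 1 else 0 :: real)"
  by (induct n) auto

lemma card_neg:
  fixes w :: "nat \<Rightarrow> real"
  assumes "\<forall>j<g+1. w j = t \<or> w j = t - 1" "(\<Sum>j<g+1. w j) = 0" "real (g+1) * t = real k" "0 < t" "t < 1"
  shows "card {j. j<g+1 \<and> w j < 0} = k"
proof -
  have "(\<Sum>j<g+1. w j) = (\<Sum>j<g+1. t - (if w j < 0 then 1 else 0))"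
    using assms(1,4,5) by (intro sum.cong) force+
  also have "\<dots> = real (g+1) * t - real (card {j. j<g+1 \<and> w j < 0})"
    by (simp only: sum_subtractf card_sum ind_sum_real) simp
  finally show ?thesis using assms(2,3) by simp
qed

lemma kset_char: assumes "1 \<le> k" "k \<le> g"
  shows "a \<in> kset g k \<longleftrightarrow> a \<in> realvecs g \<and> (\<forall>j<g+1. BTmul g a j = tt g k \<or> BTmul g a j = tt g k - 1)"
proof -
  define t where "t = tt g k"
  note tp = tt_props[OF assms, folded t_def]
  show ?thesis
  proof
    assume a: "a \<in> kset g k"
    define P where "P = {i. i < g \<and> a i = 1 - t}"
    have av: "\<forall>i<g. a i = - t \<or> a i = 1 - t" and cP: "card P = k \<or> card P = k - 1"
      and rv: "a \<in> realvecs g"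
      using a unfolding kset_def P_def tp(4) tp(5) by simp_all
    have "(\<Sum>i<g. a i) = (\<Sum>i<g. - t + (if a i = 1 - t then 1 else 0))"
      using av tp by (intro sum.cong) force+
    also have "\<dots> = - real g * t + real (card P)"
      unfolding P_def by (simp only: sum.distrib card_sum ind_sum_real) simp
    finally have s: "(\<Sum>i<g. a i) = - real g * t + real (card P)" .
    have "BTmul g a 0 = t \<or> BTmul g a 0 = t - 1"
      using cP tp(3) assms(1) unfolding BT_0 s by (auto simp: algebra_simps of_nat_diff)
    moreover have "\<forall>i<g. BTmul g a (Suc i) = t \<or> BTmul g a (Suc i) = t - 1"
      using av by (auto simp: BT_Suc)
    ultimately have "\<forall>j<g+1. BTmul g a j = t \<or> BTmul g a j = t - 1"
      by (metis Suc_eq_plus1 Suc_less_SucD not0_implies_Suc)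
    then show "a \<in> realvecs g \<and> (\<forall>j<g+1. BTmul g a j = tt g k \<or> BTmul g a j = tt g k - 1)"
      using rv t_def by simp
  next
    assume h: "a \<in> realvecs g \<and> (\<forall>j<g+1. BTmul g a j = tt g k \<or> BTmul g a j = tt g k - 1)"
    then have y: "\<forall>j<g+1. BTmul g a j = t \<or> BTmul g a j = t - 1" and rv: "a \<in> realvecs g"
      by (auto simp: t_def)
    have av: "\<forall>i<g. a i = - t \<or> a i = 1 - t"
    proof (intro allI impI)
      fix i assume "i < g"
      then show "a i = - t \<or> a i = 1 - t" using y[rule_format, of "Suc i"] BT_Suc[of i g a] by auto
    qed
    define P where "P = {i. i < g \<and> a i = 1 - t}"
    have cN: "card {j. j<g+1 \<and> BTmul g a j < 0} = k"
      using card_neg[OF y BT_sum0 tp(3) tp(1) tp(2)] .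
    have "card {j. j<g+1 \<and> BTmul g a j < 0} = (if BTmul g a 0 < 0 then 1 else 0) + (\<Sum>i<g. if BTmul g a (Suc i) < 0 then 1 else 0)"
      by (simp del: sum.lessThan_Suc add: card_sum sum.lessThan_Suc_shift)
    also have "(\<Sum>i<g. if BTmul g a (Suc i) < 0 then 1 else 0) = (\<Sum>i<g. if a i = 1 - t then 1 else (0::nat))"
      using av tp by (intro sum.cong) (auto simp: BT_Suc)
    also have "\<dots> = card P" unfolding P_def card_sum ..
    finally have "card P = k \<or> card P = k - 1" using cN by (auto split: if_splits)
    then show "a \<in> kset g k" using rv av unfolding kset_def P_def tp(4) tp(5) by simp
  qed
qed



definition ev :: "nat \<Rightarrow> (nat \<Rightarrow> real) \<Rightarrow> nat \<Rightarrow> int" where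
  "ev g a j = (if BTmul g a j < 0 then 1 else 0)"

lemma ind_sum_of_nat: fixes n :: nat
  shows "of_nat (\<Sum>i<n. if Q i then 1 else 0 :: nat) = (\<Sum>i<n. if Q i then 1 else 0 :: 'a::semiring_1)"
  by (induct n) auto

lemma nonneg_T: fixes z e :: int assumes "e = 0 \<or> e = 1" shows "0 \<le> z * (z - 1 + 2 * e)"
proof -
  have "0 \<le> z * (z - 1)" by (cases "z \<le> 0") (auto intro: mult_nonpos_nonpos)
  moreover have "0 \<le> z * (z + 1)" by (cases "z \<le> -1") (auto intro: mult_nonpos_nonpos)
  ultimately show ?thesis using assms by (auto simp: algebra_simps)
qed

lemma BT_int_real: "BTmul g (\<lambda>i. real_of_int (c i)) j = real_of_int (BTmul g c j)"
  unfolding BTmul_def by simp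

lemma del_char:
  assumes k: "1 \<le> k" "k \<le> g" and a: "a \<in> kset g k"
  shows "c \<in> delaunay g a \<longleftrightarrow> c \<in> intvecs g \<and>
     (\<forall>j<g+1. BTmul g c j * (BTmul g c j - 1 + 2 * ev g a j) = 0)"
proof -
  define t where "t = tt g k"
  note tp = tt_props[OF k, folded t_def]
  have y: "\<forall>j<g+1. BTmul g a j = t \<or> BTmul g a j = t - 1"
    using a kset_char[OF k] t_def by auto
  have ye: "\<And>j. j < g+1 \<Longrightarrow> BTmul g a j = t - of_int (ev g a j)"
    using y tp unfolding ev_def by force
  define TI where "TI j = BTmul g c j * (BTmul g c j - 1 + 2 * ev g a j)" for j
  have TI0: "0 \<le> TI j" for j unfolding TI_def by (rule nonneg_T) (simp add: ev_def)
  have pt: "(BTmul g a j - of_int (BTmul g c j))^2 = (BTmul g a j)^2 + of_int (TI j) + (1 - 2*t) * of_int (BTmul g c j)"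
    if "j < g+1" for j
    unfolding ye[OF that] TI_def by (simp add: power2_eq_square algebra_simps)
  have sz: "(\<Sum>j<g+1. real_of_int (BTmul g c j)) = 0"
    using BT_sum0[of g c] by (metis of_int_0 of_int_sum)
  have "qform g (\<lambda>i. a i - of_int (c i)) = (\<Sum>j<g+1. (BTmul g a j - of_int (BTmul g c j))^2)"
    by (simp only: qform_eq BT_lin)
  also have "\<dots> = (\<Sum>j<g+1. (BTmul g a j)^2 + of_int (TI j) + (1 - 2*t) * of_int (BTmul g c j))"
    by (rule sum.cong) (auto simp: pt)
  also have "\<dots> = qform g a + of_int (\<Sum>j<g+1. TI j)"
    by (simp only: sum.distrib qform_eq sum_distrib_left[symmetric] sz of_int_sum)
  finally have q: "qform g (\<lambda>i. a i - of_int (c i)) = qform g a + of_int (\<Sum>j<g+1. TI j)" .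
  have s: "(\<Sum>j<g+1. TI j) = 0 \<longleftrightarrow> (\<forall>j<g+1. TI j = 0)"
    using TI0 by (subst sum_nonneg_eq_0_iff) auto
  have "c \<in> delaunay g a \<longleftrightarrow> c \<in> intvecs g \<and> (\<Sum>j<g+1. TI j) = 0"
    unfolding delaunay_def by (simp add: q of_int_sum[symmetric] del: sum.lessThan_Suc of_int_sum)
  then show ?thesis using s unfolding TI_def by simp
qed



definition Ic :: "nat \<Rightarrow> (nat \<Rightarrow> real) \<Rightarrow> (nat \<Rightarrow> int) \<Rightarrow> nat set" where
  "Ic g a c = {j. j < g+1 \<and> BTmul g c j + ev g a j = 1}"

definition Sk :: "nat \<Rightarrow> nat \<Rightarrow> nat set set" where
  "Sk g k = {I. I \<subseteq> {..<g+1} \<and> card I = k}"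

definition Jf :: "nat \<Rightarrow> (nat \<Rightarrow> real) \<Rightarrow> nat set" where
  "Jf g x = {j. j < g+1 \<and> BTmul g x j < 0}"

lemma card_sub_sum: fixes I :: "nat set" assumes "I \<subseteq> {..<n}"
  shows "(\<Sum>j<n. if j \<in> I then 1 else 0 :: 'a::semiring_1) = of_nat (card I)"
proof -
  have "I = {j. j < n \<and> j \<in> I}" using assms by auto
  then show ?thesis by (metis card_sum ind_sum_of_nat)
qed

lemma J_bij: assumes k: "1 \<le> k" "k \<le> g"
  shows "bij_betw (Jf g) (kset g k) (Sk g k)"
proof -
  define t where "t = tt g k"
  note tp = tt_props[OF k, folded t_def]
  note kc = kset_char[OF k, folded t_def]
  have cardJ: "card (Jf g x) = k" if "x \<in> kset g k" for x
    unfolding Jf_def using card_neg[of g "BTmul g x" t k] kc that BT_sum0 tp by auto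
  show ?thesis unfolding bij_betw_def
  proof (intro conjI)
    show "inj_on (Jf g) (kset g k)"
    proof
      fix x1 x2 assume x1: "x1 \<in> kset g k" and x2: "x2 \<in> kset g k" and e: "Jf g x1 = Jf g x2"
      have "\<forall>j<g+1. BTmul g x1 j = BTmul g x2 j"
      proof (intro allI impI)
        fix j assume j: "j < g+1"
        have "j \<in> Jf g x1 \<longleftrightarrow> j \<in> Jf g x2" using e by simp
        then show "BTmul g x1 j = BTmul g x2 j"
          using kc x1 x2 j tp unfolding Jf_def by (smt (verit) mem_Collect_eq)
      qed
      then show "x1 = x2" using BT_uniq x1 x2 kc unfolding realvecs_def by blast
    qed
    show "Jf g ` kset g k = Sk g k"
    proof
      show "Jf g ` kset g k \<subseteq> Sk g k" using cardJ unfolding Sk_def Jf_def by auto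
      show "Sk g k \<subseteq> Jf g ` kset g k"
      proof
        fix I assume I: "I \<in> Sk g k"
        define w where "w j = t - (if j \<in> I then 1 else 0)" for j
        have Isub: "I \<subseteq> {..<g+1}" using I unfolding Sk_def by simp
        have "(\<Sum>j<g+1. w j) = (\<Sum>j<g+1. t) - (\<Sum>j<g+1. if j \<in> I then 1 else 0)"
          unfolding w_def by (rule sum_subtractf)
        also have "\<dots> = real (g+1) * t - real (card I)"
          by (simp only: card_sub_sum[OF Isub]) simp
        also have "\<dots> = 0" using I tp(3) unfolding Sk_def by simp
        finally have ws: "(\<Sum>j<g+1. w j) = 0" .
        define x where "x = (\<lambda>i. if i < g then - w (Suc i) else 0)"
        have bx: "BTmul g x j = w j" if "j < g+1" for j unfolding x_def by (rule BT_recon[OF ws that])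
        have xk: "x \<in> kset g k" unfolding kc
          using bx by (auto simp: realvecs_def x_def w_def)
        have "Jf g x = I" using bx tp(1,2) Isub unfolding Jf_def w_def by (force split: if_splits)
        then show "I \<in> Jf g ` kset g k" using xk by blast
      qed
    qed
  qed
qed



lemma I_facts: assumes k: "1 \<le> k" "k \<le> g" and a: "a \<in> kset g k"
  shows "bij_betw (Ic g a) (delaunay g a) (Sk g k)"
    and "\<And>c. c \<in> delaunay g a \<Longrightarrow> card (Ic g a c) = k"
    and "\<And>j. j < g+1 \<Longrightarrow> svec g a j = ev g a j"
proof -
  define t where "t = tt g k"
  note tp = tt_props[OF k, folded t_def]
  note kc = kset_char[OF k, folded t_def]
  note dc = del_char[OF k a]
  have y: "\<forall>j<g+1. BTmul g a j = t \<or> BTmul g a j = t - 1" using a kc by auto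
  show sv: "svec g a j = ev g a j" if "j < g+1" for j
    using y that tp unfolding svec_def ev_def by force
  have e01: "ev g a j = 0 \<or> ev g a j = 1" for j unfolding ev_def by simp
  have cE: "card {j. j<g+1 \<and> BTmul g a j < 0} = k"
    using card_neg[OF y BT_sum0 tp(3) tp(1) tp(2)] .
  have sE: "(\<Sum>j<g+1. ev g a j) = int k"
    unfolding ev_def using cE by (metis card_sum ind_sum_of_nat)
  have ZE: "BTmul g c j + ev g a j = 0 \<or> BTmul g c j + ev g a j = 1"
    if c: "c \<in> delaunay g a" and j: "j < g+1" for c j
  proof -
    have "BTmul g c j * (BTmul g c j - 1 + 2 * ev g a j) = 0" using c j dc by auto
    then show ?thesis using e01[of j] by auto
  qed
  have ZI: "BTmul g c j + ev g a j = (if j \<in> Ic g a c then 1 else 0)"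
    if c: "c \<in> delaunay g a" and j: "j < g+1" for c j
    using ZE[OF c j] j unfolding Ic_def by auto
  show cI: "card (Ic g a c) = k" if c: "c \<in> delaunay g a" for c
  proof -
    have "(\<Sum>j<g+1. BTmul g c j + ev g a j) = int k" using BT_sum0[of g c] sE
      by (simp only: sum.distrib)
    moreover have "(\<Sum>j<g+1. BTmul g c j + ev g a j) = (\<Sum>j<g+1. if j \<in> Ic g a c then 1 else 0)"
      using ZI[OF c] by (intro sum.cong) auto
    moreover have "(\<Sum>j<g+1. if j \<in> Ic g a c then 1 else 0) = (int (card (Ic g a c)))"
      by (rule card_sub_sum) (auto simp: Ic_def)
    ultimately show ?thesis by simp
  qed
  show "bij_betw (Ic g a) (delaunay g a) (Sk g k)" unfolding bij_betw_def
  proof (intro conjI)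
    show "inj_on (Ic g a) (delaunay g a)"
    proof
      fix c1 c2 assume c1: "c1 \<in> delaunay g a" and c2: "c2 \<in> delaunay g a" and e: "Ic g a c1 = Ic g a c2"
      have "\<forall>j<g+1. BTmul g c1 j = BTmul g c2 j"
        using ZI[OF c1] ZI[OF c2] e by (metis add_right_cancel)
      then show "c1 = c2" using BT_uniq c1 c2 dc unfolding intvecs_def by blast
    qed
    show "Ic g a ` delaunay g a = Sk g k"
    proof
      show "Ic g a ` delaunay g a \<subseteq> Sk g k" using cI unfolding Sk_def Ic_def by auto
      show "Sk g k \<subseteq> Ic g a ` delaunay g a"
      proof
        fix I assume I: "I \<in> Sk g k"
        have Isub: "I \<subseteq> {..<g+1}" and cardI: "card I = k" using I unfolding Sk_def by auto
        define w where "w j = (if j \<in> I then 1 else 0) - ev g a j" for j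
        have "(\<Sum>j<g+1. w j) = (\<Sum>j<g+1. if j \<in> I then 1 else 0) - (\<Sum>j<g+1. ev g a j)"
          unfolding w_def by (rule sum_subtractf)
        also have "\<dots> = 0" by (simp only: card_sub_sum[OF Isub] sE cardI)
        finally have ws: "(\<Sum>j<g+1. w j) = 0" .
        define c where "c = (\<lambda>i. if i < g then - w (Suc i) else 0)"
        have bc: "BTmul g c j = w j" if "j < g+1" for j unfolding c_def by (rule BT_recon[OF ws that])
        have cD: "c \<in> delaunay g a" unfolding dc
        proof
          show "c \<in> intvecs g" by (auto simp: intvecs_def c_def)
          show "\<forall>j<g+1. BTmul g c j * (BTmul g c j - 1 + 2 * ev g a j) = 0"
          proof (intro allI impI)
            fix j assume "j < g+1"
            then show "BTmul g c j * (BTmul g c j - 1 + 2 * ev g a j) = 0"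
              using bc e01[of j] unfolding w_def by auto
          qed
        qed
        have "Ic g a c = I" using bc Isub unfolding Ic_def w_def by (auto split: if_splits)
        then show "I \<in> Ic g a ` delaunay g a" using cD by blast
      qed
    qed
  qed
qed

lemma bases_eq: assumes k: "1 \<le> k" "k \<le> g" and a: "a \<in> kset g k"
  shows "bases g k a = Ic g a ` delaunay g a"
proof
  note F = I_facts[OF k a]
  show "bases g k a \<subseteq> Ic g a ` delaunay g a"
  proof
    fix I assume "I \<in> bases g k a"
    then obtain c where I: "I \<subseteq> {..<g+1}" "card I = k" and c: "c \<in> delaunay g a"
      and h: "\<forall>i\<in>I. BTmul g c i + svec g a i = 1" unfolding bases_def by blast
    have sub: "I \<subseteq> Ic g a c" unfolding Ic_def
    proof
      fix x assume x: "x \<in> I"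
      then have "x < g+1" using I by auto
      then show "x \<in> {j. j < g+1 \<and> BTmul g c j + ev g a j = 1}" using h x F(3)[of x] by auto
    qed
    have "finite (Ic g a c)" unfolding Ic_def by auto
    then have "I = Ic g a c" using card_subset_eq[OF _ sub] F(2)[OF c] I by simp
    then show "I \<in> Ic g a ` delaunay g a" using c by blast
  qed
  show "Ic g a ` delaunay g a \<subseteq> bases g k a"
  proof
    fix I assume "I \<in> Ic g a ` delaunay g a"
    then obtain c where c: "c \<in> delaunay g a" and I: "I = Ic g a c" by blast
    have "I \<subseteq> {..<g+1}" "card I = k" using F(2)[OF c] I unfolding Ic_def by auto
    moreover have "\<forall>i\<in>I. BTmul g c i + svec g a i = 1" using F(3) I unfolding Ic_def by auto
    ultimately show "I \<in> bases g k a" using c unfolding bases_def by blast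
  qed
qed

theorem theorem3p12:
  fixes g k :: nat and a :: "nat \<Rightarrow> real"
  assumes "g \<ge> 1" and "1 \<le> k" and "k \<le> g" and "a \<in> kset g k"
  shows "(\<exists>f. bij_betw f (delaunay g a) (kset g k)) \<and>
         (\<exists>h. bij_betw h (delaunay g a) (bases g k a))"
proof
  note F = I_facts[OF assms(2,3,4)]
  have "bij_betw (inv_into (kset g k) (Jf g) \<circ> Ic g a) (delaunay g a) (kset g k)"
    by (rule bij_betw_trans[OF F(1) bij_betw_inv_into[OF J_bij[OF assms(2,3)]]])
  then show "\<exists>f. bij_betw f (delaunay g a) (kset g k)" by blast
  have "bij_betw (Ic g a) (delaunay g a) (bases g k a)"
    unfolding bases_eq[OF assms(2,3,4)] using F(1) unfolding bij_betw_def by blast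
  then show "\<exists>h. bij_betw h (delaunay g a) (bases g k a)" by blast
qed

end
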